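(* Let $G$ be any finite forest (acyclic graph) with vertex set $[n]=\{1,\ldots,n\}$, let $H\subseteq[n]$ be arbitrary, and let $p\in(0,1)$. Then for all $u,v\in[n]$, \[ \mathbb{P}_{H,p}^G\big(u^+\leftrightarrow v^+\big)\ge \mathbb{P}_{H,p}^G\big(u^+\leftrightarrow v^-\big). \]
   Context: Bunkbed setup: for a finite graph $G$ with vertex labels $[n]$, take two copies $G^+$ and $G^-$, with vertex sets $[n]^+=\{1^+,\ldots,n^+\}$ and $[n]^-=\{1^-,\ldots,n^-\}$ and edge sets $E^+$ and $E^-$ (the copies of the edges of $G$). Given $H\subseteq[n]$, form the graph $G^\pm$ with vertex set $[n]^+\cup[n]^-$ and edge set $E^+\cup E^-\cup\{\{v^+,v^-\}: v\in H\}$. $\mathbb{P}^G_{H,p}$ is the law under which each edge of $E^+\cup E^-$ is open independently with probability $p$, and every edge $\{v^+,v^-\}$ with $v\in H$ is always open. The event $\{x\leftrightarrow y\}$ means there is a path of open edges from $x$ to $y$ in $G^\pm$. *)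

theory Defs
  imports Complex_Main
begin

definition simple_graph_on :: "nat \<Rightarrow> nat set set \<Rightarrow> bool" where
  "simple_graph_on n E \<longleftrightarrow> (\<forall>e\<in>E. e \<subseteq> {1..n} \<and> card e = 2)"

definition is_cycle :: "nat set set \<Rightarrow> nat list \<Rightarrow> bool" where
  "is_cycle E vs \<longleftrightarrow> length vs \<ge> 3 \<and> distinct vs \<and>
     (\<forall>i. Suc i < length vs \<longrightarrow> {vs ! i, vs ! Suc i} \<in> E) \<and>
     {last vs, hd vs} \<in> E"

definition forest_on :: "nat \<Rightarrow> nat set set \<Rightarrow> bool" where
  "forest_on n E \<longleftrightarrow> simple_graph_on n E \<and> (\<nexists>vs. is_cycle E vs)"

text \<open>Vertices of the bunkbed graph are pairs (v, b); b = True is the copy v^+, b = False is v^-.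
  An edge configuration S is a set of open edges of E^+ \<union> E^-, where (e, b) denotes the copy of e
  in layer b. Posts {v^+, v^-} for v \<in> H are always open.\<close>
definition bb_adj :: "nat set \<Rightarrow> (nat set \<times> bool) set \<Rightarrow> (nat \<times> bool) \<Rightarrow> (nat \<times> bool) \<Rightarrow> bool" where
  "bb_adj H S x y \<longleftrightarrow>
     (snd x = snd y \<and> fst x \<noteq> fst y \<and> ({fst x, fst y}, snd x) \<in> S) \<or>
     (fst x = fst y \<and> fst x \<in> H \<and> snd x \<noteq> snd y)"

definition bb_connected :: "nat set \<Rightarrow> (nat set \<times> bool) set \<Rightarrow> (nat \<times> bool) \<Rightarrow> (nat \<times> bool) \<Rightarrow> bool" where
  "bb_connected H S x y \<longleftrightarrow> (bb_adj H S)\<^sup>*\<^sup>* x y"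

text \<open>P^G_{H,p}(x <-> y): each of the edges of E^+ \<union> E^- open independently with probability p.\<close>
definition bb_prob :: "nat set set \<Rightarrow> nat set \<Rightarrow> real \<Rightarrow> (nat \<times> bool) \<Rightarrow> (nat \<times> bool) \<Rightarrow> real" where
  "bb_prob E H p x y =
     (\<Sum>S\<in>Pow (E \<times> (UNIV::bool set)).
        (if bb_connected H S x y then p ^ card S * (1 - p) ^ (card (E \<times> (UNIV::bool set)) - card S) else 0))"

end

theory Submission
  imports Defs
begin

definition W :: "nat set set \<Rightarrow> real \<Rightarrow> (nat set \<times> bool) set \<Rightarrow> real" where
  "W E p S = p ^ card S * (1 - p) ^ (card (E \<times> (UNIV::bool set)) - card S)"

definition ind :: "bool \<Rightarrow> real" where "ind b = (if b then 1 else 0)"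

lemma bb_prob_alt: "bb_prob E H p x y = (\<Sum>S\<in>Pow (E \<times> (UNIV::bool set)). W E p S * ind (bb_connected H S x y))"
  unfolding bb_prob_def W_def ind_def by (auto intro: sum.cong)

lemma adj_sym: "bb_adj H S a b \<Longrightarrow> bb_adj H S b a"
  unfolding bb_adj_def by (auto simp: insert_commute)

lemma conn_sym: "bb_connected H S x y \<Longrightarrow> bb_connected H S y x"
  unfolding bb_connected_def
proof (induction rule: rtranclp_induct)
  case base then show ?case by simp
next
  case (step b c)
  then show ?case using adj_sym by (meson converse_rtranclp_into_rtranclp)
qed

lemma conn_step: "bb_connected H S x y \<Longrightarrow> bb_adj H S y z \<Longrightarrow> bb_connected H S x z"
  unfolding bb_connected_def by (meson rtranclp.rtrancl_into_rtrancl)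

definition flipS :: "(nat set \<times> bool) set \<Rightarrow> (nat set \<times> bool) set" where
  "flipS S = (\<lambda>(e,b). (e, \<not> b)) ` S"

lemma flip_mem: "(e, b) \<in> flipS S \<longleftrightarrow> (e, \<not> b) \<in> S"
  unfolding flipS_def by force

lemma flipS_flipS: "flipS (flipS S) = S"
  unfolding flipS_def by (force simp: image_image)

lemma card_flipS: "card (flipS S) = card S"
  unfolding flipS_def by (rule card_image) (auto simp: inj_on_def)

lemma conn_flip: "bb_connected H S x y \<Longrightarrow> bb_connected H (flipS S) (fst x, \<not> snd x) (fst y, \<not> snd y)"
  unfolding bb_connected_def
proof (induction rule: rtranclp_induct)
  case base then show ?case by simp
next
  case (step b c)
  have "bb_adj H (flipS S) (fst b, \<not> snd b) (fst c, \<not> snd c)"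
    using step(2) unfolding bb_adj_def by (auto simp: flip_mem)
  then show ?case using step(3) by (meson rtranclp.rtrancl_into_rtrancl)
qed

lemma flipS_Pow: "S \<in> Pow (E \<times> (UNIV::bool set)) \<Longrightarrow> flipS S \<in> Pow (E \<times> (UNIV::bool set))"
  unfolding flipS_def by auto

lemma conn_flip_iff: "bb_connected H (flipS S) (u, False) (v, True) \<longleftrightarrow> bb_connected H S (u, True) (v, False)"
    using conn_flip[of H S "(u, True)" "(v, False)"] conn_flip[of H "flipS S" "(u, False)" "(v, True)"]
    by (auto simp: flipS_flipS)

lemma prob_flip: "bb_prob E H p (u, True) (v, False) = bb_prob E H p (u, False) (v, True)"
  unfolding bb_prob_def
  by (rule sum.reindex_bij_witness[of _ flipS flipS]) (auto simp: flipS_flipS card_flipS conn_flip_iff flip_mem subset_iff)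

lemma conn_sym_iff: "bb_connected H S a b = bb_connected H S b a"
  using conn_sym by blast

lemma prob_swap: "bb_prob E H p (u, True) (v, False) = bb_prob E H p (v, True) (u, False)"
proof -
  have "bb_prob E H p (u, False) (v, True) = bb_prob E H p (v, True) (u, False)"
    unfolding bb_prob_def conn_sym_iff[of H _ "(u,False)" "(v,True)"] ..
  then show ?thesis using prob_flip[of E H p u v] by simp
qed

lemma prob_swap2: "bb_prob E H p (u, True) (v, True) = bb_prob E H p (v, True) (u, True)"
  unfolding bb_prob_def conn_sym_iff[of H _ "(u,True)" "(v,True)"] ..

lemma conn_isolated:
  assumes "bb_connected H S x y" "S \<subseteq> E \<times> UNIV" "\<forall>e\<in>E. fst y \<notin> e"
  shows "fst x = fst y"
  using assms(1,3) unfolding bb_connected_def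
proof (induction rule: rtranclp_induct)
  case base then show ?case by simp
next
  case (step b c)
  show ?case
  proof (cases "fst b = fst c")
    case True then show ?thesis using step by simp
  next
    case False
    then have "({fst b, fst c}, snd b) \<in> S" using step(2) unfolding bb_adj_def by auto
    then show ?thesis using assms(2) step(4) by auto
  qed
qed

lemma W_nonneg: "0 \<le> p \<Longrightarrow> p \<le> 1 \<Longrightarrow> 0 \<le> W E p S"
  unfolding W_def by simp

lemma prob_mono:
  assumes "\<And>S. S \<in> Pow (E \<times> (UNIV::bool set)) \<Longrightarrow> bb_connected H S x y2 \<Longrightarrow> bb_connected H S x y1"
    "0 \<le> p" "p \<le> 1"
  shows "bb_prob E H p x y2 \<le> bb_prob E H p x y1"
  unfolding bb_prob_alt
  by (rule sum_mono) (use assms W_nonneg in \<open>auto simp: ind_def\<close>)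

lemma sum_Pow_insert:
  assumes "finite B" "a \<notin> B"
  shows "sum f (Pow (insert a B)) = sum f (Pow B) + sum (\<lambda>S. f (insert a S)) (Pow B)"
proof -
  have inj: "inj_on (insert a) (Pow B)"
    using assms(2) unfolding inj_on_def by (metis PowD insert_ident subset_iff)
  have "sum f (Pow (insert a B)) = sum f (Pow B \<union> insert a ` Pow B)" by (simp add: Pow_insert)
  also have "\<dots> = sum f (Pow B) + sum f (insert a ` Pow B)"
    by (rule sum.union_disjoint) (use assms in auto)
  also have "sum f (insert a ` Pow B) = sum (\<lambda>S. f (insert a S)) (Pow B)"
    using sum.reindex[OF inj] by simp
  finally show ?thesis .
qed

lemma decomp_sum:
  assumes "finite E'" "e \<notin> E'"
  shows "sum g (Pow (insert e E' \<times> (UNIV::bool set))) =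
    (\<Sum>S\<in>Pow (E' \<times> (UNIV::bool set)). g S + g (insert (e,True) S) + g (insert (e,False) S)
        + g (insert (e,True) (insert (e,False) S)))"
proof -
  have eq: "insert e E' \<times> (UNIV::bool set) = insert (e,True) (insert (e,False) (E' \<times> UNIV))"
    by (auto simp: UNIV_bool)
  have f1: "finite (insert (e,False) (E' \<times> (UNIV::bool set)))" using assms by simp
  have n1: "(e,True) \<notin> insert (e,False) (E' \<times> (UNIV::bool set))" using assms by simp
  have f2: "finite (E' \<times> (UNIV::bool set))" using assms by simp
  have n2: "(e,False) \<notin> (E' \<times> (UNIV::bool set))" using assms by simp
  show ?thesis
    unfolding eq sum_Pow_insert[OF f1 n1] sum_Pow_insert[OF f2 n2] sum.distrib[symmetric]
    by (rule sum.cong) (auto simp: insert_commute algebra_simps)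
qed

lemma card_ins_E:
  assumes "finite E'" "e \<notin> E'"
  shows "card (insert e E' \<times> (UNIV::bool set)) = card (E' \<times> (UNIV::bool set)) + 2"
  using assms by (simp add: card_cartesian_product)

lemma W_decomp:
  assumes "finite E'" "e \<notin> E'" "S \<subseteq> E' \<times> UNIV"
  shows "W (insert e E') p S = W E' p S * (1-p)^2"
    "W (insert e E') p (insert (e,True) S) = W E' p S * (p*(1-p))"
    "W (insert e E') p (insert (e,False) S) = W E' p S * (p*(1-p))"
    "W (insert e E') p (insert (e,True) (insert (e,False) S)) = W E' p S * p^2"
proof -
  have fin: "finite (E' \<times> (UNIV::bool set))" using assms by simp
  have sN: "card S \<le> card (E' \<times> (UNIV::bool set))" using card_mono[OF fin assms(3)] .
  have fS: "finite S" using finite_subset[OF assms(3) fin] .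
  have nT: "(e,True) \<notin> S" and nF: "(e,False) \<notin> S" using assms by auto
  have c1: "card (insert (e,True) S) = card S + 1" using fS nT by simp
  have c2: "card (insert (e,False) S) = card S + 1" using fS nF by simp
  have c3: "card (insert (e,True) (insert (e,False) S)) = card S + 2" using fS nT nF by simp
  have N: "card (insert e E' \<times> (UNIV::bool set)) = card (E' \<times> (UNIV::bool set)) + 2"
    using card_ins_E[OF assms(1,2)] .
  define N' where "N' = card (E' \<times> (UNIV::bool set))"
  define s where "s = card S"
  have sN': "s \<le> N'" using sN by (simp add: N'_def s_def)
  have e1: "N' + 2 - s = (N' - s) + 2" using sN' by simp
  have e2: "N' + 2 - (s + 1) = (N' - s) + 1" using sN' by simp
  have e3: "N' + 2 - (s + 2) = (N' - s)" using sN' by simp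
  show "W (insert e E') p S = W E' p S * (1-p)^2"
    unfolding W_def N c1 N'_def[symmetric] s_def[symmetric] e1 by (simp add: power_add power2_eq_square)
  show "W (insert e E') p (insert (e,True) S) = W E' p S * (p*(1-p))"
    unfolding W_def N c1 N'_def[symmetric] s_def[symmetric] e2 by (simp add: power_add)
  show "W (insert e E') p (insert (e,False) S) = W E' p S * (p*(1-p))"
    unfolding W_def N c2 N'_def[symmetric] s_def[symmetric] e2 by (simp add: power_add)
  show "W (insert e E') p (insert (e,True) (insert (e,False) S)) = W E' p S * p^2"
    unfolding W_def N c3 N'_def[symmetric] s_def[symmetric] e3 by (simp add: power_add power2_eq_square)
qed

lemma bb_decomp:
  assumes "finite E'" "e \<notin> E'"
  shows "(\<Sum>S\<in>Pow (insert e E' \<times> (UNIV::bool set)). W (insert e E') p S * ind (P S)) =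
    (\<Sum>S\<in>Pow (E' \<times> (UNIV::bool set)). W E' p S * ((1-p)^2 * ind (P S)
        + (p*(1-p)) * ind (P (insert (e,True) S)) + (p*(1-p)) * ind (P (insert (e,False) S))
        + p^2 * ind (P (insert (e,True) (insert (e,False) S)))))"
  unfolding decomp_sum[OF assms]
  by (rule sum.cong) (auto simp: W_decomp[OF assms] algebra_simps)

definition Hl :: "nat set \<Rightarrow> (nat set \<times> bool) set \<Rightarrow> nat set \<Rightarrow> nat \<Rightarrow> nat \<Rightarrow> nat set" where
  "Hl H S e l w = (if (e,True)\<in>S \<and> (e,False)\<in>S \<and> l\<in>H then insert w H else H)"

lemma leaf_edge:
  assumes "e = {l,w}" "\<forall>e'\<in>E. l \<in> e' \<longrightarrow> e' = e" "S \<subseteq> E \<times> UNIV" "({a,l},b) \<in> S" "a \<noteq> l"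
  shows "a = w \<and> {a,l} = e"
proof -
  have "{a,l} \<in> E" using assms(3,4) by auto
  then have "{a,l} = e" using assms(2) by auto
  then show ?thesis using assms(1,5) by (auto simp: doubleton_eq_iff)
qed

lemma leaf_fwd:
  assumes e: "e = {l,w}" "l \<noteq> w" and leaf: "\<forall>e'\<in>E. l \<in> e' \<longrightarrow> e' = e"
    and S: "S \<subseteq> E \<times> UNIV"
    and conn: "bb_connected H S (x1,x2) (z1,z2)" and x: "x1 \<noteq> l"
  shows "(z1 \<noteq> l \<longrightarrow> bb_connected (Hl H S e l w) (S - {e} \<times> UNIV) (x1,x2) (z1,z2)) \<and>
         (z1 = l \<longrightarrow> (\<exists>b'. bb_connected (Hl H S e l w) (S - {e} \<times> UNIV) (x1,x2) (w,b') \<and> (e,b')\<in>S \<and> (b' = z2 \<or> l \<in> H)))"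
  using conn unfolding bb_connected_def
proof (induction rule: rtranclp_induct2)
  case refl
  then show ?case using x by simp
next
  case (step a b c d)
  let ?H = "Hl H S e l w" and ?S = "S - {e} \<times> UNIV"
  have HH: "H \<subseteq> ?H" unfolding Hl_def by auto
  from step(2) have adj: "(b = d \<and> a \<noteq> c \<and> ({a,c},b) \<in> S) \<or> (a = c \<and> a \<in> H \<and> b \<noteq> d)"
    unfolding bb_adj_def by simp
  show ?case
  proof (cases "a = l")
    case False
    note aF = False
    show ?thesis
    proof (cases "c = l")
      case False
      have "bb_adj ?H ?S (a,b) (c,d)"
      proof (cases "a = c")
        case True then show ?thesis using adj HH unfolding bb_adj_def by auto
      next
        case False
        then have "({a,c},b) \<in> S" "b = d" using adj by auto
        moreover have "{a,c} \<noteq> e" using e aF \<open>c \<noteq> l\<close> by (auto simp: doubleton_eq_iff)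
        ultimately show ?thesis using False unfolding bb_adj_def by auto
      qed
      then show ?thesis using step(3) aF False by (meson rtranclp.rtrancl_into_rtrancl)
    next
      case True
      then have "({a,l},b) \<in> S" "b = d" using adj aF by auto
      then have "a = w" "{a,l} = e" using leaf_edge[OF e(1) leaf S] aF by auto
      then show ?thesis using step(3) aF True \<open>({a,l},b) \<in> S\<close> \<open>b = d\<close> by auto
    qed
  next
    case True
    note aT = True
    then obtain b' where b': "bb_connected ?H ?S (x1,x2) (w,b')" "(e,b')\<in>S" "b' = b \<or> l \<in> H"
      using step(3) unfolding bb_connected_def by auto
    show ?thesis
    proof (cases "c = l")
      case True
      then have "l \<in> H" using adj aT by auto
      then show ?thesis using b' True unfolding bb_connected_def by auto
    next
      case False
      then have "({l,c},b) \<in> S" "b = d" using adj aT by auto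
      then have "({c,l},b) \<in> S" by (simp add: insert_commute)
      then have cw: "c = w" "{c,l} = e" using leaf_edge[OF e(1) leaf S] False by auto
      have ebS: "(e,b) \<in> S" using cw \<open>({c,l},b) \<in> S\<close> by simp
      have "bb_connected ?H ?S (x1,x2) (w,b)"
      proof (cases "b' = b")
        case True then show ?thesis using b' by simp
      next
        case False
        then have "l \<in> H" using b' by auto
        have "(e,True)\<in>S \<and> (e,False)\<in>S" using False b'(2) ebS by (cases b; cases b'; auto)
        then have "w \<in> ?H" using \<open>l \<in> H\<close> unfolding Hl_def by auto
        then have "bb_adj ?H ?S (w,b') (w,b)" using False unfolding bb_adj_def by auto
        then show ?thesis using conn_step[OF b'(1)] by blast
      qed
      then show ?thesis using cw False \<open>b = d\<close> unfolding bb_connected_def by simp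
    qed
  qed
qed

lemma leaf_bwd:
  assumes e: "e = {l,w}" "l \<noteq> w" and conn: "bb_connected (Hl H S e l w) (S - {e} \<times> UNIV) x z"
  shows "bb_connected H S x z"
  using conn unfolding bb_connected_def
proof (induction rule: rtranclp_induct)
  case base then show ?case by simp
next
  case (step y z)
  let ?H = "Hl H S e l w" and ?S = "S - {e} \<times> UNIV"
  have "(bb_adj H S)\<^sup>*\<^sup>* y z"
  proof (cases "bb_adj H S y z")
    case True then show ?thesis by auto
  next
    case False
    then have post: "fst y = fst z" "fst y \<in> ?H" "fst y \<notin> H" "snd y \<noteq> snd z"
      using step(2) unfolding bb_adj_def by auto
    then have "fst y = w" "(e,True)\<in>S" "(e,False)\<in>S" "l \<in> H" unfolding Hl_def by (auto split: if_splits)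
    obtain y1 y2 where y: "y = (y1,y2)" by (cases y)
    obtain z1 z2 where z: "z = (z1,z2)" by (cases z)
    have ew: "{w,l} = e" using e by auto
    have a1: "bb_adj H S (w,y2) (l,y2)" using e \<open>(e,True)\<in>S\<close> \<open>(e,False)\<in>S\<close> ew unfolding bb_adj_def
      by (cases y2) auto
    have a2: "bb_adj H S (l,y2) (l,z2)" using \<open>l \<in> H\<close> post y z unfolding bb_adj_def by auto
    have ew2: "{l,w} = e" using e by auto
    have a3: "bb_adj H S (l,z2) (w,z2)" using e \<open>(e,True)\<in>S\<close> \<open>(e,False)\<in>S\<close> ew2 unfolding bb_adj_def
      by (cases z2) auto
    show ?thesis using a1 a2 a3 post \<open>fst y = w\<close> y z
      by (metis (no_types, lifting) fst_conv r_into_rtranclp rtranclp.rtrancl_into_rtrancl)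
  qed
  then show ?case using step(3) by auto
qed

lemma forest_sub: "forest_on n E \<Longrightarrow> E' \<subseteq> E \<Longrightarrow> forest_on n E'"
  unfolding forest_on_def simple_graph_on_def is_cycle_def by blast

lemma forest_finite: "forest_on n E \<Longrightarrow> finite E"
proof -
  assume "forest_on n E"
  then have "E \<subseteq> Pow {1..n}" unfolding forest_on_def simple_graph_on_def by auto
  then show "finite E" by (rule finite_subset) simp
qed

lemma exists_leaf:
  assumes F: "forest_on n E" and ne: "E \<noteq> {}"
  shows "\<exists>l. \<exists>e\<in>E. l \<in> e \<and> (\<forall>e'\<in>E. l \<in> e' \<longrightarrow> e' = e)"
proof -
  define P where "P vs \<longleftrightarrow> distinct vs \<and> 2 \<le> length vs \<and> (\<forall>i. Suc i < length vs \<longrightarrow> {vs!i, vs!Suc i} \<in> E)" for vs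
  have sg: "\<forall>e\<in>E. e \<subseteq> {1..n} \<and> card e = 2" using F unfolding forest_on_def simple_graph_on_def by auto
  have nc: "\<not> is_cycle E cs" for cs using F unfolding forest_on_def by auto
  obtain e0 where "e0 \<in> E" using ne by auto
  then have "card e0 = 2" using sg by blast
  then obtain a b where ab: "e0 = {a,b}" "a \<noteq> b" unfolding card_2_iff by blast
  have Pab: "P [a,b]" unfolding P_def using ab \<open>e0 \<in> E\<close> by (auto simp: less_Suc_eq)
  have bound: "length vs \<le> n" if "P vs" for vs
  proof -
    have "set vs \<subseteq> {1..n}"
    proof
      fix x assume "x \<in> set vs"
      then obtain i where i: "i < length vs" "vs!i = x" by (auto simp: in_set_conv_nth)
      show "x \<in> {1..n}"
      proof (cases "Suc i < length vs")
        case True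
        then have "{vs!i, vs!Suc i} \<in> E" using that unfolding P_def by auto
        then show ?thesis using sg i by auto
      next
        case False
        then have "i \<ge> 1" using that i unfolding P_def by auto
        then have "Suc (i-1) < length vs" using i by auto
        then have "{vs!(i-1), vs!Suc (i-1)} \<in> E" using that unfolding P_def by blast
        then show ?thesis using sg i \<open>i \<ge> 1\<close> by auto
      qed
    qed
    then have "card (set vs) \<le> n" using card_mono[of "{1..n}" "set vs"] by simp
    moreover have "distinct vs" using that unfolding P_def by blast
    ultimately show ?thesis using distinct_card[of vs] by simp
  qed
  have "\<forall>ws. P ws \<longrightarrow> length ws < Suc n" using bound by (simp add: less_Suc_eq_le)
  then obtain vs where vs: "P vs" and k: "\<forall>ws. P ws \<longrightarrow> length ws \<le> length vs"
    using ex_has_greatest_nat[of P "[a,b]" length "Suc n"] Pab by blast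
  define m where "m = length vs"
  have m2: "m \<ge> 2" using vs unfolding P_def m_def by auto
  define x where "x = vs!(m-1)"
  define y where "y = vs!(m-2)"
  have e0: "{y,x} \<in> E"
  proof -
    have "Suc (m-2) < length vs" using m2 m_def by auto
    then have "{vs!(m-2), vs!Suc (m-2)} \<in> E" using vs unfolding P_def by blast
    moreover have "Suc (m-2) = m-1" using m2 by auto
    ultimately show ?thesis unfolding x_def y_def by simp
  qed
  have L: "\<forall>e'\<in>E. x \<in> e' \<longrightarrow> e' = {y,x}"
  proof (intro ballI impI)
    fix e' assume e': "e' \<in> E" "x \<in> e'"
    obtain z where z: "e' = {x,z}" "z \<noteq> x"
    proof -
      have "card e' = 2" using sg e' by blast
      then obtain p q where "e' = {p,q}" "p \<noteq> q" unfolding card_2_iff by blast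
      note pq = this
      show ?thesis
      proof (cases "x = p")
        case True then show ?thesis using that[of q] pq by simp
      next
        case False
        then have "x = q" using pq e'(2) by auto
        then show ?thesis using that[of p] pq by (simp add: insert_commute)
      qed
    qed
    show "e' = {y,x}"
    proof (cases "z \<in> set vs")
      case False
      have "P (vs @ [z])" unfolding P_def
      proof (intro conjI allI impI)
        show "distinct (vs @ [z])" using vs False unfolding P_def by auto
        show "2 \<le> length (vs @ [z])" using m2 m_def by simp
        fix i assume i: "Suc i < length (vs @ [z])"
        show "{(vs @ [z]) ! i, (vs @ [z]) ! Suc i} \<in> E"
        proof (cases "Suc i < m")
          case True then show ?thesis using vs i unfolding P_def m_def by (auto simp: nth_append)
        next
          case False
          then have "i = m - 1" using i m_def by auto
          then have "(vs @ [z]) ! i = x" "(vs @ [z]) ! Suc i = z" using m2 unfolding x_def m_def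
            by (auto simp: nth_append)
          then show ?thesis using z e' by simp
        qed
      qed
      then have "length (vs @ [z]) \<le> length vs" using k by blast
      then show ?thesis by simp
    next
      case True
      then obtain j where j: "j < m" "vs!j = z" unfolding m_def by (auto simp: in_set_conv_nth)
      have "j \<noteq> m - 1" using j z unfolding x_def by auto
      show ?thesis
      proof (cases "j = m - 2")
        case True
        then have "z = y" using j unfolding y_def by simp
        then show ?thesis using z by blast
      next
        case False
        then have jm: "j + 3 \<le> m" using j \<open>j \<noteq> m - 1\<close> by auto
        have "is_cycle E (drop j vs)" unfolding is_cycle_def
        proof (intro conjI allI impI)
          show "3 \<le> length (drop j vs)" using jm m_def by simp
          show "distinct (drop j vs)" using vs unfolding P_def by simp
          fix i assume "Suc i < length (drop j vs)"
          then have "Suc (j+i) < length vs" by simp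
          then have "{vs!(j+i), vs!Suc (j+i)} \<in> E" using vs unfolding P_def by blast
          then show "{drop j vs ! i, drop j vs ! Suc i} \<in> E" using jm m_def by simp
        next
          have "last (drop j vs) = x" using jm m_def unfolding x_def by (simp add: last_conv_nth)
          moreover have "hd (drop j vs) = z" using jm m_def j by (simp add: hd_drop_conv_nth)
          ultimately show "{last (drop j vs), hd (drop j vs)} \<in> E" using z e' by simp
        qed
        then show ?thesis using nc by blast
      qed
    qed
  qed
  show ?thesis
  proof (intro exI bexI)
    show "{y,x} \<in> E" by (rule e0)
    show "x \<in> {y,x} \<and> (\<forall>e'\<in>E. x \<in> e' \<longrightarrow> e' = {y,x})" using L by simp
  qed
qed

lemma leaf_iff:
  assumes e: "e = {l,w}" "l \<noteq> w" and leaf: "\<forall>e'\<in>E. l \<in> e' \<longrightarrow> e' = e"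
    and S: "S \<subseteq> E \<times> UNIV" and x: "fst x \<noteq> l" and z: "fst z \<noteq> l"
  shows "bb_connected H S x z \<longleftrightarrow> bb_connected (Hl H S e l w) (S - {e} \<times> UNIV) x z"
proof
  assume "bb_connected H S x z"
  then have c: "bb_connected H S (fst x, snd x) (fst z, snd z)" by simp
  have "fst z \<noteq> l \<longrightarrow> bb_connected (Hl H S e l w) (S - {e} \<times> UNIV) (fst x, snd x) (fst z, snd z)"
    using leaf_fwd[OF e leaf S c x] by (rule conjunct1)
  then show "bb_connected (Hl H S e l w) (S - {e} \<times> UNIV) x z" using z by simp
next
  assume "bb_connected (Hl H S e l w) (S - {e} \<times> UNIV) x z"
  then show "bb_connected H S x z" by (rule leaf_bwd[OF e])
qed

lemma leaf_target:
  assumes e: "e = {l,w}" "l \<noteq> w" and leaf: "\<forall>e'\<in>E. l \<in> e' \<longrightarrow> e' = e"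
    and S: "S \<subseteq> E \<times> UNIV" and x: "fst x \<noteq> l" and lH: "l \<notin> H"
  shows "bb_connected H S x (l,b) \<longleftrightarrow> bb_connected H (S - {e} \<times> UNIV) x (w,b) \<and> (e,b) \<in> S"
proof -
  have HH: "Hl H S e l w = H" using lH unfolding Hl_def by simp
  show ?thesis
  proof
    assume "bb_connected H S x (l,b)"
    then have c: "bb_connected H S (fst x, snd x) (l, b)" by simp
    have "l = l \<longrightarrow> (\<exists>b'. bb_connected (Hl H S e l w) (S - {e} \<times> UNIV) (fst x, snd x) (w,b') \<and> (e,b')\<in>S \<and> (b' = b \<or> l \<in> H))"
      using leaf_fwd[OF e leaf S c x] by (rule conjunct2)
    then obtain b' where b': "bb_connected (Hl H S e l w) (S - {e} \<times> UNIV) (fst x, snd x) (w,b')"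
       "(e,b')\<in>S" "b' = b \<or> l \<in> H" by blast
    have "b' = b" using b'(3) lH by blast
    then show "bb_connected H (S - {e} \<times> UNIV) x (w,b) \<and> (e,b) \<in> S"
      using b'(1,2) unfolding HH by simp
  next
    assume a: "bb_connected H (S - {e} \<times> UNIV) x (w,b) \<and> (e,b) \<in> S"
    then have "bb_connected (Hl H S e l w) (S - {e} \<times> UNIV) x (w,b)" unfolding HH by blast
    then have "bb_connected H S x (w,b)" by (rule leaf_bwd[OF e])
    moreover have "bb_adj H S (w,b) (l,b)"
    proof -
      have "{w,l} = e" using e by blast
      then show ?thesis using a e(2) unfolding bb_adj_def by simp
    qed
    ultimately show "bb_connected H S x (l,b)" by (rule conn_step)
  qed
qed

lemma rm_e:
  assumes "S \<subseteq> E' \<times> UNIV" "e \<notin> E'"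
  shows "S - {e} \<times> UNIV = S" "insert (e,True) S - {e} \<times> UNIV = S"
    "insert (e,False) S - {e} \<times> UNIV = S" "insert (e,True) (insert (e,False) S) - {e} \<times> UNIV = S"
  using assms by blast+

lemma fin1: "(\<Sum>S\<in>Pow (E' \<times> (UNIV::bool set)). (1 - p^2) * (W E' p S * ind (bb_connected H S x y))
        + p^2 * (W E' p S * ind (bb_connected H2 S x y))) = (1 - p^2) * bb_prob E' H p x y + p^2 * bb_prob E' H2 p x y"
  by (simp only: bb_prob_alt sum.distrib sum_distrib_left)

lemma fin2: "(\<Sum>S\<in>Pow (E' \<times> (UNIV::bool set)). p * (W E' p S * ind (bb_connected H S x (w,b))))
    = p * bb_prob E' H p x (w,b)"
  by (simp only: bb_prob_alt sum_distrib_left)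

lemma ar1: "(Wt::real)*((1-p)^2*a + p*(1-p)*a + p*(1-p)*a + p^2*b) = (1-p^2)*(Wt*a) + p^2*(Wt*b)"
  by (simp add: power2_eq_square algebra_simps)
lemma ar2: "(Wt::real)*((1-p)^2*0 + p*(1-p)*a + p*(1-p)*0 + p^2*a) = p*(Wt*a)"
  by (simp add: power2_eq_square algebra_simps)
lemma ar3: "(Wt::real)*((1-p)^2*0 + p*(1-p)*0 + p*(1-p)*a + p^2*a) = p*(Wt*a)"
  by (simp add: power2_eq_square algebra_simps)

lemma leaf_decomp:
  assumes fin: "finite E'" and eE: "e \<notin> E'" and e: "e = {l,w}" "l \<noteq> w"
    and leaf: "\<forall>e'\<in>insert e E'. l \<in> e' \<longrightarrow> e' = e"
    and x: "fst x \<noteq> l" and y: "fst y \<noteq> l"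
  shows "bb_prob (insert e E') H p x y = (1 - p^2) * bb_prob E' H p x y
           + p^2 * bb_prob E' (if l \<in> H then insert w H else H) p x y"
proof -
  let ?H2 = "if l \<in> H then insert w H else H"
  have "bb_prob (insert e E') H p x y =
    (\<Sum>S\<in>Pow (E' \<times> (UNIV::bool set)). (1 - p^2) * (W E' p S * ind (bb_connected H S x y))
        + p^2 * (W E' p S * ind (bb_connected ?H2 S x y)))"
    unfolding bb_prob_alt bb_decomp[OF fin eE]
  proof (rule sum.cong[OF refl])
    fix S assume "S \<in> Pow (E' \<times> (UNIV::bool set))"
    then have S: "S \<subseteq> E' \<times> UNIV" by auto
    have sub: "S \<subseteq> insert e E' \<times> UNIV" "insert (e,True) S \<subseteq> insert e E' \<times> UNIV"
      "insert (e,False) S \<subseteq> insert e E' \<times> UNIV" "insert (e,True) (insert (e,False) S) \<subseteq> insert e E' \<times> UNIV"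
      using S by blast+
    have nT: "(e,True) \<notin> S" and nF: "(e,False) \<notin> S" using S eE by blast+
    have h1: "Hl H (insert (e,True) S) e l w = H" using nF unfolding Hl_def by simp
    have h2: "Hl H (insert (e,False) S) e l w = H" using nT unfolding Hl_def by simp
    have h3: "Hl H (insert (e,True) (insert (e,False) S)) e l w = ?H2" unfolding Hl_def by simp
    have c1: "bb_connected H (insert (e,True) S) x y = bb_connected H S x y"
      using leaf_iff[OF e leaf sub(2) x y, of H, unfolded h1 rm_e(2)[OF S eE]] .
    have c2: "bb_connected H (insert (e,False) S) x y = bb_connected H S x y"
      using leaf_iff[OF e leaf sub(3) x y, of H, unfolded h2 rm_e(3)[OF S eE]] .
    have c3: "bb_connected H (insert (e,True) (insert (e,False) S)) x y = bb_connected ?H2 S x y"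
      using leaf_iff[OF e leaf sub(4) x y, of H, unfolded h3 rm_e(4)[OF S eE]] .
    show "W E' p S * ((1 - p)\<^sup>2 * ind (bb_connected H S x y) +
          p * (1 - p) * ind (bb_connected H (insert (e, True) S) x y) +
          p * (1 - p) * ind (bb_connected H (insert (e, False) S) x y) +
          p\<^sup>2 * ind (bb_connected H (insert (e, True) (insert (e, False) S)) x y)) =
         (1 - p^2) * (W E' p S * ind (bb_connected H S x y)) + p^2 * (W E' p S * ind (bb_connected ?H2 S x y))"
      unfolding c1 c2 c3 by (rule ar1)
  qed
  also have "\<dots> = (1 - p^2) * bb_prob E' H p x y + p^2 * bb_prob E' ?H2 p x y"
    by (rule fin1)
  finally show ?thesis .
qed

lemma target_decomp:
  assumes fin: "finite E'" and eE: "e \<notin> E'" and e: "e = {l,w}" "l \<noteq> w"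
    and leaf: "\<forall>e'\<in>insert e E'. l \<in> e' \<longrightarrow> e' = e"
    and x: "fst x \<noteq> l" and lH: "l \<notin> H"
  shows "bb_prob (insert e E') H p x (l,b) = p * bb_prob E' H p x (w,b)"
proof -
  have "bb_prob (insert e E') H p x (l,b) =
    (\<Sum>S\<in>Pow (E' \<times> (UNIV::bool set)). p * (W E' p S * ind (bb_connected H S x (w,b))))"
    unfolding bb_prob_alt bb_decomp[OF fin eE]
  proof (rule sum.cong[OF refl])
    fix S assume "S \<in> Pow (E' \<times> (UNIV::bool set))"
    then have S: "S \<subseteq> E' \<times> UNIV" by auto
    have sub: "S \<subseteq> insert e E' \<times> UNIV" "insert (e,True) S \<subseteq> insert e E' \<times> UNIV"
      "insert (e,False) S \<subseteq> insert e E' \<times> UNIV" "insert (e,True) (insert (e,False) S) \<subseteq> insert e E' \<times> UNIV"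
      using S by blast+
    have nT: "(e,True) \<notin> S" and nF: "(e,False) \<notin> S" using S eE by blast+
    have t0: "bb_connected H S x (l,b) = (bb_connected H (S - {e} \<times> UNIV) x (w,b) \<and> (e,b) \<in> S)"
      by (rule leaf_target[OF e leaf sub(1) x lH])
    have c0: "bb_connected H S x (l,b) = False"
      unfolding t0 using nT nF by (cases b) simp_all
    have t1: "bb_connected H (insert (e,True) S) x (l,b) = (bb_connected H S x (w,b) \<and> (e,b) \<in> insert (e,True) S)"
      using leaf_target[OF e leaf sub(2) x lH, of b, unfolded rm_e(2)[OF S eE]] .
    have c1: "bb_connected H (insert (e,True) S) x (l,b) = (bb_connected H S x (w,b) \<and> b)"
      unfolding t1 using nF by (cases b) simp_all
    have t2: "bb_connected H (insert (e,False) S) x (l,b) = (bb_connected H S x (w,b) \<and> (e,b) \<in> insert (e,False) S)"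
      using leaf_target[OF e leaf sub(3) x lH, of b, unfolded rm_e(3)[OF S eE]] .
    have c2: "bb_connected H (insert (e,False) S) x (l,b) = (bb_connected H S x (w,b) \<and> \<not> b)"
      unfolding t2 using nT by (cases b) simp_all
    have t3: "bb_connected H (insert (e,True) (insert (e,False) S)) x (l,b) = (bb_connected H S x (w,b) \<and> (e,b) \<in> insert (e,True) (insert (e,False) S))"
      using leaf_target[OF e leaf sub(4) x lH, of b, unfolded rm_e(4)[OF S eE]] .
    have c3: "bb_connected H (insert (e,True) (insert (e,False) S)) x (l,b) = bb_connected H S x (w,b)"
      unfolding t3 by (cases b) simp_all
    show "W E' p S * ((1 - p)\<^sup>2 * ind (bb_connected H S x (l,b)) +
          p * (1 - p) * ind (bb_connected H (insert (e, True) S) x (l,b)) +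
          p * (1 - p) * ind (bb_connected H (insert (e, False) S) x (l,b)) +
          p\<^sup>2 * ind (bb_connected H (insert (e, True) (insert (e, False) S)) x (l,b))) =
         p * (W E' p S * ind (bb_connected H S x (w,b)))"
      proof (cases b)
        case True
        have i1: "ind (bb_connected H S x (w,b) \<and> b) = ind (bb_connected H S x (w,b))" using True by simp
        have i2: "ind (bb_connected H S x (w,b) \<and> \<not> b) = 0" using True by (simp add: ind_def)
        have i0: "ind False = 0" by (simp add: ind_def)
        show ?thesis unfolding c0 c1 c2 c3 i0 i1 i2
          by (rule ar2[where Wt="W E' p S" and p=p and a="ind (bb_connected H S x (w,b))"])
      next
        case False
        have i1: "ind (bb_connected H S x (w,b) \<and> \<not> b) = ind (bb_connected H S x (w,b))" using False by simp
        have i2: "ind (bb_connected H S x (w,b) \<and> b) = 0" using False by (simp add: ind_def)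
        have i0: "ind False = 0" by (simp add: ind_def)
        show ?thesis unfolding c0 c1 c2 c3 i0 i1 i2
          by (rule ar3[where Wt="W E' p S" and p=p and a="ind (bb_connected H S x (w,b))"])
      qed
  qed
  also have "\<dots> = p * bb_prob E' H p x (w,b)"
    by (rule fin2)
  finally show ?thesis .
qed

lemma edge_other:
  assumes "forest_on n E" "e \<in> E" "v \<in> e"
  shows "\<exists>w. e = {v,w} \<and> v \<noteq> w"
proof -
  have "card e = 2" using assms unfolding forest_on_def simple_graph_on_def by blast
  then obtain a b where ab: "e = {a,b}" "a \<noteq> b" unfolding card_2_iff by blast
  show ?thesis
  proof (cases "v = a")
    case True then show ?thesis using ab by blast
  next
    case False
    then have "v = b" using ab assms(3) by blast
    then have "e = {v,a}" using ab by blast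
    then show ?thesis using ab \<open>v = b\<close> by blast
  qed
qed

lemma main_gen:
  assumes "forest_on n E" "0 \<le> p" "p \<le> 1"
  shows "bb_prob E H p (u,True) (v,False) \<le> bb_prob E H p (u,True) (v,True)"
  using assms
proof (induction "card E" arbitrary: E H u v rule: less_induct)
  case less
  note F = less.prems(1) and p0 = less.prems(2) and p1 = less.prems(3)
  have fin: "finite E" using forest_finite[OF F] .
  have IH: "bb_prob (E - {e}) H' p (u',True) (v',False) \<le> bb_prob (E - {e}) H' p (u',True) (v',True)"
    if "e \<in> E" for e H' u' v'
  proof -
    have "card (E - {e}) < card E" using card_Diff1_less[OF fin that] .
    moreover have "forest_on n (E - {e})" using forest_sub[OF F] by blast
    ultimately show ?thesis using less.hyps p0 p1 by blast
  qed
  have K: "bb_prob E H p (u',True) (v',False) \<le> bb_prob E H p (u',True) (v',True)"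
    if Ke: "e \<in> E" "e = {v',w}" "v' \<noteq> w" and Kl: "\<forall>e'\<in>E. v' \<in> e' \<longrightarrow> e' = e" and Ku: "u' \<noteq> v'"
    for u' v' e w
  proof (cases "v' \<in> H")
    case True
    show ?thesis
    proof (rule prob_mono[OF _ p0 p1])
      fix S assume "bb_connected H S (u',True) (v',False)"
      moreover have "bb_adj H S (v',False) (v',True)" using True unfolding bb_adj_def by simp
      ultimately show "bb_connected H S (u',True) (v',True)" by (rule conn_step)
    qed
  next
    case False
    define E' where "E' = E - {e}"
    have EE: "E = insert e E'" using Ke(1) unfolding E'_def by blast
    have fin': "finite E'" using fin unfolding E'_def by simp
    have eE: "e \<notin> E'" unfolding E'_def by simp
    have leaf': "\<forall>e'\<in>insert e E'. v' \<in> e' \<longrightarrow> e' = e" using Kl EE by simp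
    have x: "fst (u',True) \<noteq> v'" using Ku by simp
    have eq: "bb_prob E H p (u',True) (v',b) = p * bb_prob E' H p (u',True) (w,b)" for b
      using target_decomp[OF fin' eE Ke(2,3) leaf' x False, of p b] EE by simp
    have "bb_prob E' H p (u',True) (w,False) \<le> bb_prob E' H p (u',True) (w,True)"
      using IH[OF Ke(1)] unfolding E'_def .
    then show ?thesis unfolding eq using p0 by (rule mult_left_mono)
  qed
  show ?case
  proof (cases "u = v")
    case True
    show ?thesis
    proof (rule prob_mono[OF _ p0 p1])
      fix S show "bb_connected H S (u,True) (v,True)" using True unfolding bb_connected_def by simp
    qed
  next
    case uv: False
    show ?thesis
    proof (cases "\<forall>e\<in>E. v \<notin> e")
      case True
      show ?thesis
      proof (rule prob_mono[OF _ p0 p1])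
        fix S assume "S \<in> Pow (E \<times> (UNIV::bool set))" "bb_connected H S (u,True) (v,False)"
        then have "fst (u,True) = fst (v,False)" using conn_isolated[of H S "(u,True)" "(v,False)" E] True by auto
        then show "bb_connected H S (u,True) (v,True)" using uv by simp
      qed
    next
      case vne: False
      show ?thesis
      proof (cases "\<forall>e\<in>E. u \<notin> e")
        case True
        show ?thesis
        proof (rule prob_mono[OF _ p0 p1])
          fix S assume "S \<in> Pow (E \<times> (UNIV::bool set))" "bb_connected H S (u,True) (v,False)"
          then have "bb_connected H S (v,False) (u,True)" "S \<subseteq> E \<times> UNIV" using conn_sym by auto
          then have "fst (v,False) = fst (u,True)" using conn_isolated[of H S "(v,False)" "(u,True)" E] True by auto
          then show "bb_connected H S (u,True) (v,True)" using uv by simp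
        qed
      next
        case une: False
        show ?thesis
        proof (cases "\<exists>e\<in>E. v \<in> e \<and> (\<forall>e'\<in>E. v \<in> e' \<longrightarrow> e' = e)")
          case True
          then obtain e where e: "e \<in> E" "v \<in> e" "\<forall>e'\<in>E. v \<in> e' \<longrightarrow> e' = e" by blast
          then obtain w where ew: "e = {v,w}" "v \<noteq> w" using edge_other[OF F] by blast
          show ?thesis by (rule K[OF e(1) ew e(3) uv])
        next
          case vnl: False
          show ?thesis
          proof (cases "\<exists>e\<in>E. u \<in> e \<and> (\<forall>e'\<in>E. u \<in> e' \<longrightarrow> e' = e)")
            case True
            then obtain e where e: "e \<in> E" "u \<in> e" "\<forall>e'\<in>E. u \<in> e' \<longrightarrow> e' = e" by blast
            then obtain w where ew: "e = {u,w}" "u \<noteq> w" using edge_other[OF F] by blast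
            have vu: "v \<noteq> u" using uv by simp
            have "bb_prob E H p (v,True) (u,False) \<le> bb_prob E H p (v,True) (u,True)"
              by (rule K[OF e(1) ew e(3) vu])
            then show ?thesis unfolding prob_swap[of E H p u v] prob_swap2[of E H p u v] .
          next
            case unl: False
            have "E \<noteq> {}" using une by blast
            then obtain l e where le: "e \<in> E" "l \<in> e" "\<forall>e'\<in>E. l \<in> e' \<longrightarrow> e' = e"
              using exists_leaf[OF F] by blast
            then obtain w where lw: "e = {l,w}" "l \<noteq> w" using edge_other[OF F] by blast
            have lu: "l \<noteq> u" using unl le by blast
            have lv: "l \<noteq> v" using vnl le by blast
            define E' where "E' = E - {e}"
            have EE: "E = insert e E'" using le(1) unfolding E'_def by blast
            have fin': "finite E'" using fin unfolding E'_def by simp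
            have eE: "e \<notin> E'" unfolding E'_def by simp
            have leaf': "\<forall>e'\<in>insert e E'. l \<in> e' \<longrightarrow> e' = e" using le(3) EE by simp
            have x: "fst (u,True) \<noteq> l" using lu by simp
            have y: "fst (v,b) \<noteq> l" for b using lv by simp
            define H2 where "H2 = (if l \<in> H then insert w H else H)"
            have eq: "bb_prob E H p (u,True) (v,b) = (1 - p^2) * bb_prob E' H p (u,True) (v,b)
                + p^2 * bb_prob E' H2 p (u,True) (v,b)" for b
              using leaf_decomp[OF fin' eE lw leaf' x y, of H p] EE unfolding H2_def by simp
            have i1: "bb_prob E' H p (u,True) (v,False) \<le> bb_prob E' H p (u,True) (v,True)"
              using IH[OF le(1)] unfolding E'_def .
            have i2: "bb_prob E' H2 p (u,True) (v,False) \<le> bb_prob E' H2 p (u,True) (v,True)"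
              using IH[OF le(1)] unfolding E'_def .
            have c1: "0 \<le> 1 - p^2" using p0 p1 by (simp add: power_le_one)
            have c2: "0 \<le> p^2" by simp
            show ?thesis unfolding eq
              by (rule add_mono[OF mult_left_mono[OF i1 c1] mult_left_mono[OF i2 c2]])
          qed
        qed
      qed
    qed
  qed
qed

theorem mainTheorem1:
  fixes n :: nat and E :: "nat set set" and H :: "nat set" and p :: real and u v :: nat
  assumes "forest_on n E"
    and "H \<subseteq> {1..n}"
    and "0 < p" and "p < 1"
    and "u \<in> {1..n}" and "v \<in> {1..n}"
  shows "bb_prob E H p (u, True) (v, True) \<ge> bb_prob E H p (u, True) (v, False)"
  using main_gen[OF assms(1)] assms(3,4) by simp

end
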